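(* Let $G$ be any weighted finite graph with $N$ vertices. Then for each $1\leq k\leq N$, \[ \overline{h}(k)\leq 1-h(k). \] Moreover: (i) $\overline{h}(k)=1$ if and only if $G$ has at least $k$ connected components each of which is bipartite. (ii) If $G$ is bipartite, then $h(k)+\overline{h}(k)=1$ for each $1\leq k\leq N$. (iii) If $h(k)+\overline{h}(k)=1$, then for a $k$-sub-bipartition $\{(V_{2i-1},V_{2i})\}_{i=1}^k$ attaining the maximum in the definition of $\overline{h}(k)$, and an index $i_0$ with $\phi(V_{2i_0-1}\cup V_{2i_0})=\max_{1\leq i\leq k}\phi(V_{2i-1}\cup V_{2i})$, one has $|E(V_{2i_0-1},V_{2i_0-1})|=|E(V_{2i_0},V_{2i_0})|=0$.
   Context: $G=(V,E,w)$ is a finite undirected graph without self-loops, with $N=|V|$; each edge $\{u,v\}$ carries a positive symmetric weight $w_{uv}$, and $w_{uv}=0$ for non-edges. $d_u=\sum_v w_{uv}$ (implicitly positive). For $A,B\subseteq V$, $|E(A,B)|:=\sum_{u\in A,v\in B}w_{uv}$, $\mathrm{vol}(A):=\sum_{u\in A}d_u$, $\overline{A}=V\setminus A$. For nonempty $S$, $\phi(S):=|E(S,\overline{S})|/\mathrm{vol}(S)$; $h(k):=\min\max_{1\leq i\leq k}\phi(S_i)$ over all collections of $k$ nonempty pairwise disjoint subsets $S_1,\ldots,S_k\subseteq V$. For disjoint $V_1,V_2$ with $V_1\cup V_2\neq\emptyset$, $\overline{\phi}(V_1,V_2):=2|E(V_1,V_2)|/\mathrm{vol}(V_1\cup V_2)$.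 A $k$-sub-bipartition is a collection of $k$ pairs $(V_1,V_2),\ldots,(V_{2k-1},V_{2k})$ of pairwise disjoint subsets of $V$ with $V_{2i-1}\cup V_{2i}\neq\emptyset$ for each $i$ (individual sets may be empty); $\overline{h}(k):=\max\min_{1\leq i\leq k}\overline{\phi}(V_{2i-1},V_{2i})$ over all $k$-sub-bipartitions. A graph is bipartite if its vertex set splits into two classes with every edge joining vertices of different classes. *)

theory Defs
  imports Complex_Main
begin

text \<open>A weighted finite graph is given by a finite vertex set V and a weight
  function w; w u v > 0 iff {u,v} is an edge, w u v = 0 otherwise.\<close>

definition weighted_graph :: "'a set \<Rightarrow> ('a \<Rightarrow> 'a \<Rightarrow> real) \<Rightarrow> bool" where
  "weighted_graph V w \<longleftrightarrow> finite V
     \<and> (\<forall>u v. w u v = w v u)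
     \<and> (\<forall>u v. w u v \<ge> 0)
     \<and> (\<forall>u. w u u = 0)
     \<and> (\<forall>u v. (u \<notin> V \<or> v \<notin> V) \<longrightarrow> w u v = 0)"

definition deg :: "'a set \<Rightarrow> ('a \<Rightarrow> 'a \<Rightarrow> real) \<Rightarrow> 'a \<Rightarrow> real" where
  "deg V w u = (\<Sum>v\<in>V. w u v)"

definition cut :: "('a \<Rightarrow> 'a \<Rightarrow> real) \<Rightarrow> 'a set \<Rightarrow> 'a set \<Rightarrow> real" where
  "cut w A B = (\<Sum>u\<in>A. \<Sum>v\<in>B. w u v)"

definition vol :: "'a set \<Rightarrow> ('a \<Rightarrow> 'a \<Rightarrow> real) \<Rightarrow> 'a set \<Rightarrow> real" where
  "vol V w A = (\<Sum>u\<in>A. deg V w u)"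

definition phi :: "'a set \<Rightarrow> ('a \<Rightarrow> 'a \<Rightarrow> real) \<Rightarrow> 'a set \<Rightarrow> real" where
  "phi V w S = cut w S (V - S) / vol V w S"

definition phibar :: "'a set \<Rightarrow> ('a \<Rightarrow> 'a \<Rightarrow> real) \<Rightarrow> 'a set \<Rightarrow> 'a set \<Rightarrow> real" where
  "phibar V w A B = 2 * cut w A B / vol V w (A \<union> B)"

definition disjoint_family_k :: "'a set \<Rightarrow> nat \<Rightarrow> (nat \<Rightarrow> 'a set) \<Rightarrow> bool" where
  "disjoint_family_k V k S \<longleftrightarrow>
     (\<forall>i\<in>{1..k}. S i \<noteq> {} \<and> S i \<subseteq> V)
     \<and> (\<forall>i\<in>{1..k}. \<forall>j\<in>{1..k}. i \<noteq> j \<longrightarrow> S i \<inter> S j = {})"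

definition h :: "'a set \<Rightarrow> ('a \<Rightarrow> 'a \<Rightarrow> real) \<Rightarrow> nat \<Rightarrow> real" where
  "h V w k = Min ((\<lambda>S. Max ((\<lambda>i. phi V w (S i)) ` {1..k})) ` {S. disjoint_family_k V k S})"

definition sub_bipartition :: "'a set \<Rightarrow> nat \<Rightarrow> (nat \<Rightarrow> 'a set) \<Rightarrow> bool" where
  "sub_bipartition V k P \<longleftrightarrow>
     (\<forall>i\<in>{1..2*k}. P i \<subseteq> V)
     \<and> (\<forall>i\<in>{1..2*k}. \<forall>j\<in>{1..2*k}. i \<noteq> j \<longrightarrow> P i \<inter> P j = {})
     \<and> (\<forall>i\<in>{1..k}. P (2*i - 1) \<union> P (2*i) \<noteq> {})"

definition hbar_val :: "'a set \<Rightarrow> ('a \<Rightarrow> 'a \<Rightarrow> real) \<Rightarrow> nat \<Rightarrow> (nat \<Rightarrow> 'a set) \<Rightarrow> real" where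
  "hbar_val V w k P = Min ((\<lambda>i. phibar V w (P (2*i - 1)) (P (2*i))) ` {1..k})"

definition hbar :: "'a set \<Rightarrow> ('a \<Rightarrow> 'a \<Rightarrow> real) \<Rightarrow> nat \<Rightarrow> real" where
  "hbar V w k = Max (hbar_val V w k ` {P. sub_bipartition V k P})"

definition adj :: "'a set \<Rightarrow> ('a \<Rightarrow> 'a \<Rightarrow> real) \<Rightarrow> ('a \<times> 'a) set" where
  "adj V w = {(u, v). u \<in> V \<and> v \<in> V \<and> w u v > 0}"

definition components :: "'a set \<Rightarrow> ('a \<Rightarrow> 'a \<Rightarrow> real) \<Rightarrow> 'a set set" where
  "components V w = {(adj V w)\<^sup>* `` {v} | v. v \<in> V}"

definition bipartite_on :: "('a \<Rightarrow> 'a \<Rightarrow> real) \<Rightarrow> 'a set \<Rightarrow> bool" where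
  "bipartite_on w C \<longleftrightarrow> (\<exists>A B. A \<union> B = C \<and> A \<inter> B = {}
      \<and> (\<forall>u\<in>C. \<forall>v\<in>C. w u v > 0 \<longrightarrow> \<not> ((u \<in> A \<and> v \<in> A) \<or> (u \<in> B \<and> v \<in> B))))"

end

theory Submission
  imports Defs "HOL-Library.FuncSet"
begin

lemma wgD: assumes "weighted_graph V w"
  shows "finite V" "w u v = w v u" "w u v \<ge> 0" "w u u = 0" "u \<notin> V \<Longrightarrow> w u v = 0" "v \<notin> V \<Longrightarrow> w u v = 0"
  using assms unfolding weighted_graph_def by auto

lemma cut_nonneg: "weighted_graph V w \<Longrightarrow> cut w A B \<ge> 0"
  unfolding cut_def by (intro sum_nonneg) (auto dest: wgD(3))

lemma cut_sym: assumes "weighted_graph V w" shows "cut w A B = cut w B A"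
proof -
  have "cut w A B = (\<Sum>v\<in>B. \<Sum>u\<in>A. w u v)" unfolding cut_def by (rule sum.swap)
  also have "\<dots> = cut w B A" unfolding cut_def by (intro sum.cong refl) (rule wgD(2)[OF assms])
  finally show ?thesis .
qed

lemma cut_union2: "finite B \<Longrightarrow> finite C \<Longrightarrow> B \<inter> C = {} \<Longrightarrow> cut w A (B \<union> C) = cut w A B + cut w A C"
  unfolding cut_def by (simp add: sum.union_disjoint sum.distrib)

lemma cut_union1: "finite B \<Longrightarrow> finite C \<Longrightarrow> B \<inter> C = {} \<Longrightarrow> cut w (B \<union> C) A = cut w B A + cut w C A"
  unfolding cut_def by (simp add: sum.union_disjoint)

lemma vol_eq: assumes "weighted_graph V w" "S \<subseteq> V"
  shows "vol V w S = cut w S S + cut w S (V - S)"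
proof -
  have "vol V w S = cut w S V" unfolding vol_def deg_def cut_def by simp
  also have "cut w S V = cut w S (S \<union> (V - S))" using assms(2) by (simp add: Un_absorb1)
  also have "\<dots> = cut w S S + cut w S (V - S)" using wgD(1)[OF assms(1)] assms(2)
    by (intro cut_union2) (auto intro: rev_finite_subset)
  finally show ?thesis .
qed

lemma vol_pos: assumes "weighted_graph V w" "\<forall>u\<in>V. deg V w u > 0" "S \<subseteq> V" "S \<noteq> {}"
  shows "vol V w S > 0"
  unfolding vol_def using assms wgD(1)[OF assms(1)]
  by (intro sum_pos) (auto intro: rev_finite_subset)

lemma cut_zero: assumes "weighted_graph V w" "cut w A B = 0" "finite A" "finite B" "u \<in> A" "v \<in> B"
  shows "w u v = 0"
proof -
  have nn: "\<And>u v. w u v \<ge> 0" using wgD(3)[OF assms(1)] by auto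
  have "\<forall>u\<in>A. (\<Sum>v\<in>B. w u v) = 0"
    using assms(2,3) unfolding cut_def by (subst (asm) sum_nonneg_eq_0_iff) (auto intro: sum_nonneg nn)
  then have "(\<Sum>v\<in>B. w u v) = 0" using assms(5) by auto
  then show ?thesis using assms(4,6) by (subst (asm) sum_nonneg_eq_0_iff) (auto intro: nn)
qed

lemma alg: "(v::real) > 0 \<Longrightarrow> v = a + 2*c + b + t \<Longrightarrow> 2*c/v = 1 - t/v - (a+b)/v"
proof -
  assume "v > 0" "v = a + 2*c + b + t"
  from \<open>v > 0\<close> have "1 - t/v - (a+b)/v = (v - t - (a+b))/v" by (simp add: field_simps)
  then show ?thesis using \<open>v = a + 2*c + b + t\<close> by simp
qed

lemma key: assumes g: "weighted_graph V w" and d: "\<forall>u\<in>V. deg V w u > 0"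
  and AB: "A \<subseteq> V" "B \<subseteq> V" "A \<inter> B = {}" "A \<union> B \<noteq> {}"
shows "phibar V w A B = 1 - phi V w (A \<union> B) - (cut w A A + cut w B B) / vol V w (A \<union> B)"
proof -
  have fin: "finite A" "finite B" using AB wgD(1)[OF g] by (auto intro: rev_finite_subset)
  define S where "S = A \<union> B"
  have vp: "vol V w S > 0" using vol_pos[OF g d] AB S_def by auto
  have "cut w S S = cut w A A + cut w A B + cut w B A + cut w B B"
    unfolding S_def using fin AB by (simp add: cut_union1 cut_union2)
  moreover have "cut w B A = cut w A B" using cut_sym[OF g] by auto
  moreover have "vol V w S = cut w S S + cut w S (V - S)" using vol_eq[OF g] AB S_def by auto
  ultimately have e: "vol V w S = cut w A A + 2 * cut w A B + cut w B B + cut w S (V - S)" by simp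
  show ?thesis unfolding phibar_def phi_def S_def[symmetric] using alg[OF vp e] by simp
qed


lemma hbar_fin: assumes "finite V" shows "finite (hbar_val V w k ` {P. sub_bipartition V k P})"
proof -
  have "hbar_val V w k ` {P. sub_bipartition V k P} \<subseteq> hbar_val V w k ` (PiE {1..2*k} (\<lambda>_. Pow V))"
  proof
    fix x assume "x \<in> hbar_val V w k ` {P. sub_bipartition V k P}"
    then obtain P where P: "sub_bipartition V k P" "x = hbar_val V w k P" by auto
    have e: "hbar_val V w k (restrict P {1..2*k}) = hbar_val V w k P"
      unfolding hbar_val_def by (intro arg_cong[where f=Min] image_cong) auto
    have m: "restrict P {1..2*k} \<in> PiE {1..2*k} (\<lambda>_. Pow V)" using P(1) unfolding sub_bipartition_def by auto
    show "x \<in> hbar_val V w k ` (PiE {1..2*k} (\<lambda>_. Pow V))" unfolding P(2) using e m by (rule image_eqI[OF sym])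
  qed
  then show ?thesis by (rule finite_subset) (intro finite_imageI finite_PiE; simp add: assms)
qed

lemma h_fin: assumes "finite V" shows "finite ((\<lambda>S. Max ((\<lambda>i. phi V w (S i)) ` {1..k})) ` {S. disjoint_family_k V k S})"
proof -
  let ?F = "(\<lambda>S. Max ((\<lambda>i. phi V w (S i)) ` {1..k}))"
  have "?F ` {S. disjoint_family_k V k S} \<subseteq> ?F ` (PiE {1..k} (\<lambda>_. Pow V))"
  proof
    fix x assume "x \<in> ?F ` {S. disjoint_family_k V k S}"
    then obtain P where P: "disjoint_family_k V k P" "x = ?F P" by auto
    have e: "?F (restrict P {1..k}) = ?F P"
      by (intro arg_cong[where f=Max] image_cong) auto
    have m: "restrict P {1..k} \<in> PiE {1..k} (\<lambda>_. Pow V)" using P(1) unfolding disjoint_family_k_def by auto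
    show "x \<in> ?F ` (PiE {1..k} (\<lambda>_. Pow V))" unfolding P(2) using e m by (rule image_eqI[OF sym])
  qed
  then show ?thesis by (rule finite_subset) (intro finite_imageI finite_PiE; simp add: assms)
qed

lemma mk_subbip:
  assumes "\<forall>i\<in>{1..k}. A i \<subseteq> V \<and> B i \<subseteq> V \<and> A i \<inter> B i = {} \<and> A i \<union> B i \<noteq> {}"
   and "\<forall>i\<in>{1..k}. \<forall>j\<in>{1..k}. i \<noteq> j \<longrightarrow> (A i \<union> B i) \<inter> (A j \<union> B j) = {}"
  shows "sub_bipartition V k (\<lambda>j. if even j then B (j div 2) else A ((j+1) div 2))
     \<and> (\<forall>i\<in>{1..k}. (\<lambda>j. if even j then B (j div 2) else A ((j+1) div 2)) (2*i-1) = A i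
                  \<and> (\<lambda>j. if even j then B (j div 2) else A ((j+1) div 2)) (2*i) = B i)"
proof -
  define P where "P = (\<lambda>j. if even j then B (j div 2) else A ((j+1) div 2))"
  have Pi: "P (2*i-1) = A i \<and> P (2*i) = B i" if "i \<in> {1..k}" for i
    using that unfolding P_def by (auto simp: odd_pos)
  have sub: "P j \<subseteq> A ((j+1) div 2) \<union> B ((j+1) div 2)" "(j+1) div 2 \<in> {1..k}" if "j \<in> {1..2*k}" for j
    using that unfolding P_def by auto
  have disj: "P j \<inter> P j' = {}" if "j \<in> {1..2*k}" "j' \<in> {1..2*k}" "j \<noteq> j'" for j j'
  proof (cases "(j+1) div 2 = (j'+1) div 2")
    case True
    then have "even j \<noteq> even j'" using that(3) by presburger
    moreover have "m div 2 = (m+1) div 2" if "even m" for m :: nat using that by presburger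
    ultimately show ?thesis using True assms(1) sub(2)[OF that(1)] unfolding P_def
      by (cases "even j") (auto split: if_splits)
  next
    case False
    then show ?thesis using assms(2) sub[OF that(1)] sub[OF that(2)] by blast
  qed
  have "sub_bipartition V k P"
    unfolding sub_bipartition_def
  proof (intro conjI ballI impI)
    fix j assume "j \<in> {1..2*k}" then show "P j \<subseteq> V" using sub[of j] assms(1) by blast
  next
    fix i j assume "i \<in> {1..2*k}" "j \<in> {1..2*k}" "i \<noteq> j" then show "P i \<inter> P j = {}" using disj by blast
  next
    fix i assume "i \<in> {1..k}" then show "P (2*i-1) \<union> P (2*i) \<noteq> {}" using Pi assms(1) by auto
  qed
  then show ?thesis using Pi unfolding P_def by blast
qed

lemma mk_subbip_ex:
  assumes "\<forall>i\<in>{1..k}. A i \<subseteq> V \<and> B i \<subseteq> V \<and> A i \<inter> B i = {} \<and> A i \<union> B i \<noteq> {}"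
   and "\<forall>i\<in>{1..k}. \<forall>j\<in>{1..k}. i \<noteq> j \<longrightarrow> (A i \<union> B i) \<inter> (A j \<union> B j) = {}"
  shows "\<exists>P. sub_bipartition V k P \<and> (\<forall>i\<in>{1..k}. P (2*i-1) = A i \<and> P (2*i) = B i)"
  by (rule exI, rule mk_subbip[OF assms])

lemma subbip_family: assumes "sub_bipartition V k P"
  shows "disjoint_family_k V k (\<lambda>i. P (2*i-1) \<union> P (2*i))"
  unfolding disjoint_family_k_def
proof (intro conjI ballI impI)
  fix i assume i: "i \<in> {1..k}"
  then show "P (2*i-1) \<union> P (2*i) \<noteq> {}" using assms unfolding sub_bipartition_def by auto
  have "2*i-1 \<in> {1..2*k}" "2*i \<in> {1..2*k}" using i by auto
  then show "P (2*i-1) \<union> P (2*i) \<subseteq> V" using assms unfolding sub_bipartition_def by auto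
next
  fix i j assume ij: "i \<in> {1..k}" "j \<in> {1..k}" "i \<noteq> j"
  have D: "\<And>a b. a \<in> {1..2*k} \<Longrightarrow> b \<in> {1..2*k} \<Longrightarrow> a \<noteq> b \<Longrightarrow> P a \<inter> P b = {}"
    using assms unfolding sub_bipartition_def by auto
  have "P (2*i-1) \<inter> P (2*j-1) = {}" "P (2*i-1) \<inter> P (2*j) = {}" "P (2*i) \<inter> P (2*j-1) = {}" "P (2*i) \<inter> P (2*j) = {}"
    by (rule D; use ij in auto)+
  then show "(P (2*i-1) \<union> P (2*i)) \<inter> (P (2*j-1) \<union> P (2*j)) = {}" by blast
qed


lemma adj_sym: "weighted_graph V w \<Longrightarrow> sym (adj V w)"
  unfolding sym_def adj_def by (auto simp: wgD(2)[of V w])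

lemma comp_sub: assumes "(x, y) \<in> (adj V w)\<^sup>*" "x \<in> V" shows "y \<in> V"
  using assms by (induction rule: rtrancl_induct) (auto simp: adj_def)

lemma comp_subset: assumes "x \<in> V" shows "(adj V w)\<^sup>* `` {x} \<subseteq> V"
proof
  fix y assume "y \<in> (adj V w)\<^sup>* `` {x}"
  then have "(x, y) \<in> (adj V w)\<^sup>*" by simp
  then show "y \<in> V" using assms by (rule comp_sub)
qed

lemma comp_closed: assumes "(x, y) \<in> (adj V w)\<^sup>*" "x \<in> T"
  "\<forall>a\<in>T. \<forall>b\<in>V. w a b > 0 \<longrightarrow> b \<in> T"
  shows "y \<in> T"
  using assms by (induction rule: rtrancl_induct) (auto simp: adj_def)

lemma comp_eq: assumes g: "weighted_graph V w" and "z \<in> (adj V w)\<^sup>* `` {a}" "z \<in> (adj V w)\<^sup>* `` {b}"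
  shows "(adj V w)\<^sup>* `` {a} = (adj V w)\<^sup>* `` {b}"
proof -
  have s: "sym ((adj V w)\<^sup>*)" using adj_sym[OF g] sym_rtrancl by blast
  have az: "(a,z) \<in> (adj V w)\<^sup>*" "(b,z) \<in> (adj V w)\<^sup>*" using assms by auto
  then have "(z,b) \<in> (adj V w)\<^sup>*" "(z,a) \<in> (adj V w)\<^sup>*" using s by (auto dest: symD)
  then have "(a,b) \<in> (adj V w)\<^sup>*" "(b,a) \<in> (adj V w)\<^sup>*" using az by auto
  then show ?thesis by (auto intro: rtrancl_trans)
qed

lemma comp_outside: assumes g: "weighted_graph V w" and C: "C = (adj V w)\<^sup>* `` {x}" "x \<in> V"
  shows "cut w C (V - C) = 0"
  unfolding cut_def
proof (intro sum.neutral ballI)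
  fix u v assume u: "u \<in> C" and v: "v \<in> V - C"
  show "w u v = 0"
  proof (rule ccontr)
    assume "w u v \<noteq> 0"
    then have "w u v > 0" using wgD(3)[OF g, of u v] by auto
    moreover have "u \<in> V" using u C comp_sub by fastforce
    ultimately have "(u,v) \<in> adj V w" using v unfolding adj_def by auto
    then have "v \<in> C" using u C by (auto intro: rtrancl_into_rtrancl)
    then show False using v by auto
  qed
qed

lemma cut_within_zero: assumes g: "weighted_graph V w" and "A \<subseteq> V"
  and "\<forall>u\<in>A. \<forall>v\<in>A. \<not> w u v > 0" shows "cut w A A = 0"
  unfolding cut_def using assms wgD(3)[OF g] by (intro sum.neutral ballI) (meson not_less order_antisym)

lemma phi_nonneg: "weighted_graph V w \<Longrightarrow> phi V w S \<ge> 0"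
  unfolding phi_def vol_def deg_def
  by (intro divide_nonneg_nonneg cut_nonneg sum_nonneg) (auto dest: wgD(3))


theorem proposition3p1:
  fixes V :: "'a set" and w :: "'a \<Rightarrow> 'a \<Rightarrow> real" and k :: nat
  assumes graph: "weighted_graph V w"
    and deg_pos: "\<forall>u\<in>V. deg V w u > 0"
    and k: "1 \<le> k" "k \<le> card V"
  shows "hbar V w k \<le> 1 - h V w k
    \<and> (hbar V w k = 1 \<longleftrightarrow> card {C \<in> components V w. bipartite_on w C} \<ge> k)
    \<and> (bipartite_on w V \<longrightarrow> h V w k + hbar V w k = 1)
    \<and> (h V w k + hbar V w k = 1 \<longrightarrow>
         (\<forall>P i0. sub_bipartition V k P \<and> hbar_val V w k P = hbar V w k
            \<and> i0 \<in> {1..k}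
            \<and> phi V w (P (2*i0 - 1) \<union> P (2*i0))
                = Max ((\<lambda>i. phi V w (P (2*i - 1) \<union> P (2*i))) ` {1..k})
            \<longrightarrow> cut w (P (2*i0 - 1)) (P (2*i0 - 1)) = 0
              \<and> cut w (P (2*i0)) (P (2*i0)) = 0))"
proof -
  have fin: "finite V" using wgD(1)[OF graph] .
  have finsub: "finite X" if "X \<subseteq> V" for X using that by (rule rev_finite_subset[OF fin])
  obtain f where f: "f ` {1..k} \<subseteq> V" "inj_on f {1..k}"
    using card_le_inj[of "{1..k}" V] fin k by auto
  have kne: "{1..k} \<noteq> {}" using k by auto
  define F where "F = (\<lambda>S. Max ((\<lambda>i. phi V w (S i)) ` {1..k}))"
  have hdef: "h V w k = Min (F ` {S. disjoint_family_k V k S})" unfolding h_def F_def ..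
  have hfin: "finite (F ` {S. disjoint_family_k V k S})" unfolding F_def using h_fin[OF fin] .
  have "disjoint_family_k V k (\<lambda>i. {f i})" unfolding disjoint_family_k_def
    using f by (auto dest: inj_onD)
  then have hne: "F ` {S. disjoint_family_k V k S} \<noteq> {}" by auto
  have H1: "h V w k \<le> F S" if "disjoint_family_k V k S" for S
    unfolding hdef using that hfin by (intro Min_le) auto
  obtain S0 where S0: "disjoint_family_k V k S0" "h V w k = F S0"
    using Min_in[OF hfin hne] unfolding hdef by auto
  have Fge: "phi V w (S i) \<le> F S" if "i \<in> {1..k}" for S i
    unfolding F_def using that by (intro Max_ge) auto
  have hnn: "h V w k \<ge> 0" using S0 Fge[of 1 S0] phi_nonneg[OF graph, of "S0 1"] k by auto
  have bfin: "finite (hbar_val V w k ` {P. sub_bipartition V k P})" using hbar_fin[OF fin] .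
  have c1: "\<forall>i\<in>{1..k}. {f i} \<subseteq> V \<and> ({}::'a set) \<subseteq> V \<and> {f i} \<inter> {} = {} \<and> {f i} \<union> {} \<noteq> {}"
    using f by auto
  have c2: "\<forall>i\<in>{1..k}. \<forall>j\<in>{1..k}. i \<noteq> j \<longrightarrow> ({f i} \<union> {}) \<inter> ({f j} \<union> {}) = {}"
    using f(2) by (auto dest: inj_onD)
  have "\<exists>P. sub_bipartition V k P"
    using mk_subbip_ex[OF c1 c2] by blast
  then have bne: "hbar_val V w k ` {P. sub_bipartition V k P} \<noteq> {}" by blast
  have B1: "hbar_val V w k P \<le> hbar V w k" if "sub_bipartition V k P" for P
    unfolding hbar_def using that bfin by (intro Max_ge) auto
  obtain P0 where P0: "sub_bipartition V k P0" "hbar V w k = hbar_val V w k P0"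
    using Max_in[OF bfin bne] unfolding hbar_def by auto
  have hv_le: "hbar_val V w k P \<le> phibar V w (P (2*i-1)) (P (2*i))" if "i \<in> {1..k}" for P i
    unfolding hbar_val_def using that by (intro Min_le) auto
  have hv_ge: "c \<le> hbar_val V w k P" if "\<forall>i\<in>{1..k}. c \<le> phibar V w (P (2*i-1)) (P (2*i))" for P c
    unfolding hbar_val_def using that kne by (subst Min_ge_iff) auto
  have pieces: "P (2*i-1) \<subseteq> V \<and> P (2*i) \<subseteq> V \<and> P (2*i-1) \<inter> P (2*i) = {} \<and> P (2*i-1) \<union> P (2*i) \<noteq> {}"
    if "sub_bipartition V k P" "i \<in> {1..k}" for P i
  proof -
    have "2*i-1 \<in> {1..2*k}" "2*i \<in> {1..2*k}" "2*i-1 \<noteq> 2*i" using that(2) by auto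
    then show ?thesis using that unfolding sub_bipartition_def by blast
  qed
  define fr where "fr = (\<lambda>A B. (cut w A A + cut w B B) / vol V w (A \<union> B))"
  have keyP: "phibar V w (P (2*i-1)) (P (2*i)) = 1 - phi V w (P (2*i-1) \<union> P (2*i)) - fr (P (2*i-1)) (P (2*i))"
    "fr (P (2*i-1)) (P (2*i)) \<ge> 0" "vol V w (P (2*i-1) \<union> P (2*i)) > 0"
    if "sub_bipartition V k P" "i \<in> {1..k}" for P i
  proof -
    note pc = pieces[OF that]
    show "phibar V w (P (2*i-1)) (P (2*i)) = 1 - phi V w (P (2*i-1) \<union> P (2*i)) - fr (P (2*i-1)) (P (2*i))"
      unfolding fr_def using key[OF graph deg_pos] pc by blast
    show vp: "vol V w (P (2*i-1) \<union> P (2*i)) > 0" using vol_pos[OF graph deg_pos] pc by auto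
    show "fr (P (2*i-1)) (P (2*i)) \<ge> 0" unfolding fr_def using vp cut_nonneg[OF graph]
      by (intro divide_nonneg_nonneg add_nonneg_nonneg) auto
  qed
  have X: "hbar_val V w k P \<le> 1 - phi V w (P (2*i0-1) \<union> P (2*i0)) - fr (P (2*i0-1)) (P (2*i0))
       \<and> 1 - phi V w (P (2*i0-1) \<union> P (2*i0)) \<le> 1 - h V w k"
    if "sub_bipartition V k P" "i0 \<in> {1..k}"
       "phi V w (P (2*i0 - 1) \<union> P (2*i0)) = Max ((\<lambda>i. phi V w (P (2*i - 1) \<union> P (2*i))) ` {1..k})" for P i0
  proof -
    have "h V w k \<le> F (\<lambda>i. P (2*i-1) \<union> P (2*i))" using H1 subbip_family[OF that(1)] by blast
    then have "h V w k \<le> phi V w (P (2*i0-1) \<union> P (2*i0))" using that(3) unfolding F_def by simp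
    then show ?thesis using hv_le[OF that(2), of P] keyP(1)[OF that(1,2)] by simp
  qed
  have M1: "hbar V w k \<le> 1 - h V w k"
  proof -
    obtain i0 where i0: "i0 \<in> {1..k}"
      "phi V w (P0 (2*i0 - 1) \<union> P0 (2*i0)) = Max ((\<lambda>i. phi V w (P0 (2*i - 1) \<union> P0 (2*i))) ` {1..k})"
      using Max_in[of "(\<lambda>i. phi V w (P0 (2*i - 1) \<union> P0 (2*i))) ` {1..k}"] kne by fastforce
    show ?thesis using X[OF P0(1) i0] keyP(2)[OF P0(1) i0(1)] P0(2) by linarith
  qed
  have M3: "cut w (P (2*i0 - 1)) (P (2*i0 - 1)) = 0 \<and> cut w (P (2*i0)) (P (2*i0)) = 0"
    if hh: "h V w k + hbar V w k = 1" and "sub_bipartition V k P" "hbar_val V w k P = hbar V w k" "i0 \<in> {1..k}"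
       "phi V w (P (2*i0 - 1) \<union> P (2*i0)) = Max ((\<lambda>i. phi V w (P (2*i - 1) \<union> P (2*i))) ` {1..k})" for P i0
  proof -
    have "fr (P (2*i0-1)) (P (2*i0)) \<le> 0" using X[OF that(2,4,5)] that(3) hh by linarith
    then have "fr (P (2*i0-1)) (P (2*i0)) = 0" using keyP(2)[OF that(2,4)] by linarith
    then have "cut w (P (2*i0-1)) (P (2*i0-1)) + cut w (P (2*i0)) (P (2*i0)) = 0"
      using keyP(3)[OF that(2,4)] unfolding fr_def by simp
    then show ?thesis using cut_nonneg[OF graph, of "P (2*i0-1)" "P (2*i0-1)"] cut_nonneg[OF graph, of "P (2*i0)" "P (2*i0)"]
      by linarith
  qed
  have M2: "h V w k + hbar V w k = 1" if bip: "bipartite_on w V"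
  proof -
    obtain A B where AB: "A \<union> B = V" "A \<inter> B = {}"
      "\<forall>u\<in>V. \<forall>v\<in>V. w u v > 0 \<longrightarrow> \<not> ((u \<in> A \<and> v \<in> A) \<or> (u \<in> B \<and> v \<in> B))"
      using bip unfolding bipartite_on_def by blast
    have S0p: "S0 i \<noteq> {} \<and> S0 i \<subseteq> V" if "i \<in> {1..k}" for i using S0(1) that unfolding disjoint_family_k_def by blast
    have S0d: "S0 i \<inter> S0 j = {}" if "i \<in> {1..k}" "j \<in> {1..k}" "i \<noteq> j" for i j
      using S0(1) that unfolding disjoint_family_k_def by blast
    have un: "(S0 i \<inter> A) \<union> (S0 i \<inter> B) = S0 i" if "i \<in> {1..k}" for i using S0p[OF that] AB(1) by blast
    have c1: "\<forall>i\<in>{1..k}. S0 i \<inter> A \<subseteq> V \<and> S0 i \<inter> B \<subseteq> V \<and> (S0 i \<inter> A) \<inter> (S0 i \<inter> B) = {} \<and> (S0 i \<inter> A) \<union> (S0 i \<inter> B) \<noteq> {}"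
    proof
      fix i assume i: "i \<in> {1..k}"
      show "S0 i \<inter> A \<subseteq> V \<and> S0 i \<inter> B \<subseteq> V \<and> (S0 i \<inter> A) \<inter> (S0 i \<inter> B) = {} \<and> (S0 i \<inter> A) \<union> (S0 i \<inter> B) \<noteq> {}"
        using S0p[OF i] un[OF i] AB(2) by blast
    qed
    have c2: "\<forall>i\<in>{1..k}. \<forall>j\<in>{1..k}. i \<noteq> j \<longrightarrow> ((S0 i \<inter> A) \<union> (S0 i \<inter> B)) \<inter> ((S0 j \<inter> A) \<union> (S0 j \<inter> B)) = {}"
    proof (intro ballI impI)
      fix i j assume i: "i \<in> {1..k}" and j: "j \<in> {1..k}" and ij: "i \<noteq> j"
      show "((S0 i \<inter> A) \<union> (S0 i \<inter> B)) \<inter> ((S0 j \<inter> A) \<union> (S0 j \<inter> B)) = {}"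
        unfolding un[OF i] un[OF j] using S0d[OF i j ij] .
    qed
    obtain P where P: "sub_bipartition V k P" "\<forall>i\<in>{1..k}. P (2*i-1) = S0 i \<inter> A \<and> P (2*i) = S0 i \<inter> B"
      using mk_subbip_ex[OF c1 c2] by blast
    have ph2: "1 - h V w k \<le> phibar V w (P (2*i-1)) (P (2*i))" if i: "i \<in> {1..k}" for i
    proof -
      have "cut w (S0 i \<inter> A) (S0 i \<inter> A) = 0" "cut w (S0 i \<inter> B) (S0 i \<inter> B) = 0"
        using S0p[OF i] AB(3) by (intro cut_within_zero[OF graph]; blast)+
      then have "fr (P (2*i-1)) (P (2*i)) = 0" using P(2) i unfolding fr_def by simp
      moreover have "phi V w (S0 i) \<le> h V w k" using Fge[OF i, of S0] S0(2) by simp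
      moreover have "P (2*i-1) \<union> P (2*i) = S0 i" using P(2) un i by auto
      ultimately show ?thesis using keyP(1)[OF P(1) i] by simp
    qed
    have "1 - h V w k \<le> hbar_val V w k P" by (rule hv_ge) (use ph2 in blast)
    then have "1 - h V w k \<le> hbar V w k" using B1[OF P(1)] by linarith
    then show ?thesis using M1 by linarith
  qed
  define BC where "BC = {C \<in> components V w. bipartite_on w C}"
  have compV: "C \<subseteq> V" if Cc: "C \<in> components V w" for C
  proof
    fix y assume y: "y \<in> C"
    obtain x where x: "x \<in> V" "C = (adj V w)\<^sup>* `` {x}" using Cc unfolding components_def by blast
    then have "(x, y) \<in> (adj V w)\<^sup>*" using y by blast
    then show "y \<in> V" using comp_sub x(1) by metis
  qed
  have "BC \<subseteq> Pow V" unfolding BC_def using compV by blast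
  then have BCfin: "finite BC" using fin by (rule finite_subset[OF _ finite_Pow_iff[THEN iffD2]])
  have I1: "k \<le> card BC" if h1: "hbar V w k = 1"
  proof -
    have ge1: "1 \<le> phibar V w (P0 (2*i-1)) (P0 (2*i))" if "i \<in> {1..k}" for i
      using hv_le[OF that, of P0] P0(2) h1 by simp
    define S where "S = (\<lambda>i. P0 (2*i-1) \<union> P0 (2*i))"
    have zer: "phi V w (S i) = 0 \<and> cut w (P0 (2*i-1)) (P0 (2*i-1)) = 0 \<and> cut w (P0 (2*i)) (P0 (2*i)) = 0"
      if i: "i \<in> {1..k}" for i
    proof -
      have "phi V w (S i) = 0" "fr (P0 (2*i-1)) (P0 (2*i)) = 0"
        using ge1[OF i] keyP(1,2)[OF P0(1) i] phi_nonneg[OF graph, of "S i"] unfolding S_def by linarith+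
      then show ?thesis using keyP(3)[OF P0(1) i] cut_nonneg[OF graph, of "P0 (2*i-1)" "P0 (2*i-1)"]
          cut_nonneg[OF graph, of "P0 (2*i)" "P0 (2*i)"] unfolding fr_def by simp
    qed
    have Sfam: "disjoint_family_k V k S" unfolding S_def using subbip_family[OF P0(1)] .
    define v where "v = (\<lambda>i. SOME x. x \<in> S i)"
    have vS: "v i \<in> S i" "S i \<subseteq> V" if "i \<in> {1..k}" for i
      using Sfam that unfolding disjoint_family_k_def v_def by (auto simp: some_in_eq)
    define C where "C = (\<lambda>i. (adj V w)\<^sup>* `` {v i})"
    have CS: "C i \<subseteq> S i" if i: "i \<in> {1..k}" for i
    proof
      fix y assume "y \<in> C i"
      then have y: "(v i, y) \<in> (adj V w)\<^sup>*" unfolding C_def by auto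
      have "cut w (S i) (V - S i) / vol V w (S i) = 0" using zer[OF i] unfolding phi_def by blast
      moreover have "vol V w (S i) > 0" using keyP(3)[OF P0(1) i] unfolding S_def .
      ultimately have cz: "cut w (S i) (V - S i) = 0" by simp
      have "\<forall>a\<in>S i. \<forall>b\<in>V. w a b > 0 \<longrightarrow> b \<in> S i"
      proof (intro ballI impI)
        fix a b assume a: "a \<in> S i" and b: "b \<in> V" and wab: "w a b > 0"
        show "b \<in> S i"
        proof (rule ccontr)
          assume "b \<notin> S i"
          then have "b \<in> V - S i" using b by blast
          then have "w a b = 0" using cut_zero[OF graph cz finsub[OF vS(2)[OF i]] finite_Diff[OF fin] a] by blast
          then show False using wab by simp
        qed
      qed
      then show "y \<in> S i" using comp_closed[OF y vS(1)[OF i]] by blast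
    qed
    have CBC: "C i \<in> BC" if i: "i \<in> {1..k}" for i
    proof -
      have "C i \<in> components V w" unfolding components_def C_def using vS[OF i] by auto
      moreover have "bipartite_on w (C i)" unfolding bipartite_on_def
      proof (intro exI conjI)
        let ?A = "C i \<inter> P0 (2*i-1)" and ?B = "C i \<inter> P0 (2*i)"
        show "?A \<union> ?B = C i" using CS[OF i] unfolding S_def by auto
        show "?A \<inter> ?B = {}" using pieces[OF P0(1) i] by auto
        have fA: "finite (P0 (2*i-1))" "finite (P0 (2*i))" using pieces[OF P0(1) i] finsub by auto
        show "\<forall>u\<in>C i. \<forall>v\<in>C i. 0 < w u v \<longrightarrow> \<not> (u \<in> ?A \<and> v \<in> ?A \<or> u \<in> ?B \<and> v \<in> ?B)"
          using cut_zero[OF graph conjunct1[OF conjunct2[OF zer[OF i]]] fA(1) fA(1)]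
                cut_zero[OF graph conjunct2[OF conjunct2[OF zer[OF i]]] fA(2) fA(2)] by auto
      qed
      ultimately show ?thesis unfolding BC_def by auto
    qed
    have "inj_on C {1..k}"
    proof (rule inj_onI)
      fix i j assume ij: "i \<in> {1..k}" "j \<in> {1..k}" "C i = C j"
      have "v i \<in> C i" unfolding C_def by auto
      then have "v i \<in> S i \<inter> S j" using CS ij vS by auto
      then show "i = j" using Sfam ij unfolding disjoint_family_k_def by blast
    qed
    then have "card {1..k} \<le> card BC" using CBC BCfin by (intro card_inj_on_le) auto
    then show ?thesis by simp
  qed
  have I2: "hbar V w k = 1" if kc: "k \<le> card BC"
  proof -
    obtain g where g: "g ` {1..k} \<subseteq> BC" "inj_on g {1..k}"
      using card_le_inj[of "{1..k}" BC] BCfin kc by auto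
    have gc: "\<exists>x\<in>V. g i = (adj V w)\<^sup>* `` {x}" "bipartite_on w (g i)" if "i \<in> {1..k}" for i
    proof -
      have "g i \<in> BC" using g(1) that by blast
      then show "\<exists>x\<in>V. g i = (adj V w)\<^sup>* `` {x}" "bipartite_on w (g i)"
        unfolding BC_def components_def by blast+
    qed
    define R where "R = (\<lambda>i A B. A \<union> B = g i \<and> A \<inter> B = {}
      \<and> (\<forall>u\<in>g i. \<forall>v\<in>g i. w u v > 0 \<longrightarrow> \<not> ((u \<in> A \<and> v \<in> A) \<or> (u \<in> B \<and> v \<in> B))))"
    have "\<forall>i\<in>{1..k}. \<exists>p. R i (fst p) (snd p)"
    proof
      fix i assume i: "i \<in> {1..k}"
      obtain A B where "R i A B" using gc(2)[OF i] unfolding bipartite_on_def R_def by blast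
      then show "\<exists>p. R i (fst p) (snd p)" by (intro exI[of _ "(A, B)"]) simp
    qed
    from bchoice[OF this] obtain p where p: "\<forall>i\<in>{1..k}. R i (fst (p i)) (snd (p i))" by blast
    define A where "A = (\<lambda>i. fst (p i))"
    define B where "B = (\<lambda>i. snd (p i))"
    have ABR: "R i (A i) (B i)" if "i \<in> {1..k}" for i using p that unfolding A_def B_def by blast
    have AB1: "A i \<union> B i = g i" and AB2: "A i \<inter> B i = {}"
      and AB3: "\<forall>u\<in>g i. \<forall>v\<in>g i. w u v > 0 \<longrightarrow> \<not> ((u \<in> A i \<and> v \<in> A i) \<or> (u \<in> B i \<and> v \<in> B i))"
      if "i \<in> {1..k}" for i using ABR[OF that] unfolding R_def by blast+
    have gV: "g i \<subseteq> V" "g i \<noteq> {}" if gi: "i \<in> {1..k}" for i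
    proof -
      obtain x where x: "x \<in> V" "g i = (adj V w)\<^sup>* `` {x}" using gc(1)[OF gi] by blast
      show "g i \<subseteq> V" unfolding x(2) using x(1) by (rule comp_subset)
      show "g i \<noteq> {}" using x by blast
    qed
    have gd: "g i \<inter> g j = {}" if ijk: "i \<in> {1..k}" "j \<in> {1..k}" "i \<noteq> j" for i j
    proof (rule ccontr)
      assume "g i \<inter> g j \<noteq> {}"
      then obtain z where z: "z \<in> g i" "z \<in> g j" by auto
      obtain a b where "g i = (adj V w)\<^sup>* `` {a}" "g j = (adj V w)\<^sup>* `` {b}" using gc(1)[OF ijk(1)] gc(1)[OF ijk(2)] by blast
      then have "g i = g j" using comp_eq[OF graph, of z a b] z by simp
      then show False using inj_onD[OF g(2) _ ijk(1,2)] ijk(3) by blast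
    qed
    have c1: "\<forall>i\<in>{1..k}. A i \<subseteq> V \<and> B i \<subseteq> V \<and> A i \<inter> B i = {} \<and> A i \<union> B i \<noteq> {}"
    proof
      fix i assume i: "i \<in> {1..k}"
      have "A i \<union> B i = g i" "A i \<inter> B i = {}" using AB1[OF i] AB2[OF i] by auto
      then show "A i \<subseteq> V \<and> B i \<subseteq> V \<and> A i \<inter> B i = {} \<and> A i \<union> B i \<noteq> {}"
        using gV[OF i] by blast
    qed
    have c2: "\<forall>i\<in>{1..k}. \<forall>j\<in>{1..k}. i \<noteq> j \<longrightarrow> (A i \<union> B i) \<inter> (A j \<union> B j) = {}"
    proof (intro ballI impI)
      fix i j assume i: "i \<in> {1..k}" and j: "j \<in> {1..k}" and ij: "i \<noteq> j"
      have "A i \<union> B i = g i" "A j \<union> B j = g j" using AB1[OF i] AB1[OF j] by auto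
      then show "(A i \<union> B i) \<inter> (A j \<union> B j) = {}" using gd[OF i j ij] by simp
    qed
    obtain P where P: "sub_bipartition V k P" "\<forall>i\<in>{1..k}. P (2*i-1) = A i \<and> P (2*i) = B i"
      using mk_subbip_ex[OF c1 c2] by blast
    have ph1: "1 \<le> phibar V w (P (2*i-1)) (P (2*i))" if i: "i \<in> {1..k}" for i
    proof -
      have Ai: "A i \<union> B i = g i"
        "\<forall>u\<in>g i. \<forall>v\<in>g i. w u v > 0 \<longrightarrow> \<not> ((u \<in> A i \<and> v \<in> A i) \<or> (u \<in> B i \<and> v \<in> B i))"
        using AB1[OF i] AB3[OF i] by auto
      have s1: "A i \<subseteq> V" "B i \<subseteq> V" using Ai(1) gV(1)[OF i] by blast+
      have s2: "\<forall>u\<in>A i. \<forall>v\<in>A i. \<not> w u v > 0" "\<forall>u\<in>B i. \<forall>v\<in>B i. \<not> w u v > 0"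
        using Ai by blast+
      have "cut w (A i) (A i) = 0" "cut w (B i) (B i) = 0"
        using cut_within_zero[OF graph s1(1) s2(1)] cut_within_zero[OF graph s1(2) s2(2)] .
      then have "fr (P (2*i-1)) (P (2*i)) = 0" using P(2) i unfolding fr_def by simp
      moreover have "phi V w (g i) = 0"
      proof -
        obtain x where x: "x \<in> V" "g i = (adj V w)\<^sup>* `` {x}" using gc(1)[OF i] by blast
        have "cut w (g i) (V - g i) = 0" using comp_outside[OF graph x(2) x(1)] .
        then show ?thesis unfolding phi_def by simp
      qed
      moreover have "P (2*i-1) \<union> P (2*i) = g i" using P(2) AB1[OF i] i by auto
      ultimately show ?thesis using keyP(1)[OF P(1) i] by simp
    qed
    have "1 \<le> hbar_val V w k P" by (rule hv_ge) (use ph1 in blast)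
    then have "1 \<le> hbar V w k" using B1[OF P(1)] by linarith
    then show ?thesis using M1 hnn by linarith
  qed
  have I: "hbar V w k = 1 \<longleftrightarrow> card {C \<in> components V w. bipartite_on w C} \<ge> k"
    using I1 I2 unfolding BC_def by blast
  show ?thesis
  proof (intro conjI)
    show "hbar V w k \<le> 1 - h V w k" by (rule M1)
    show "hbar V w k = 1 \<longleftrightarrow> card {C \<in> components V w. bipartite_on w C} \<ge> k" by (rule I)
    show "bipartite_on w V \<longrightarrow> h V w k + hbar V w k = 1" using M2 by blast
    show "h V w k + hbar V w k = 1 \<longrightarrow>
         (\<forall>P i0. sub_bipartition V k P \<and> hbar_val V w k P = hbar V w k
            \<and> i0 \<in> {1..k}
            \<and> phi V w (P (2*i0 - 1) \<union> P (2*i0))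
                = Max ((\<lambda>i. phi V w (P (2*i - 1) \<union> P (2*i))) ` {1..k})
            \<longrightarrow> cut w (P (2*i0 - 1)) (P (2*i0 - 1)) = 0
              \<and> cut w (P (2*i0)) (P (2*i0)) = 0)"
    proof (intro impI allI)
      fix P i0 assume hh: "h V w k + hbar V w k = 1" and c: "sub_bipartition V k P \<and> hbar_val V w k P = hbar V w k
            \<and> i0 \<in> {1..k}
            \<and> phi V w (P (2*i0 - 1) \<union> P (2*i0))
                = Max ((\<lambda>i. phi V w (P (2*i - 1) \<union> P (2*i))) ` {1..k})"
      then show "cut w (P (2*i0 - 1)) (P (2*i0 - 1)) = 0 \<and> cut w (P (2*i0)) (P (2*i0)) = 0"
        using M3[OF hh] by blast
    qed
  qed
qed

end
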